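(* There exists a geodesic triangle in $\mathbf{Sol}$ with three distinct vertices in $\mathbf{Sol}$, not lying on a common geodesic, whose interior angle sum is exactly $\pi$.
   Context: $\mathbf{Sol}$ is $\mathbb{R}^3$ with coordinates $(x,y,z)$, with group law $(a,b,c)(x,y,z)=(x+ae^{-z},\,y+be^{z},\,z+c)$ and left-invariant Riemannian metric $ds^2=e^{2z}dx^2+e^{-2z}dy^2+dz^2$. A geodesic triangle consists of three points (vertices) and geodesic segments (sides) joining them pairwise; the interior angle at a vertex is the angle, measured with the Riemannian metric at that vertex, between the initial tangent vectors of the two sides issuing from that vertex. *)

theory Defs
  imports "HOL-Analysis.Analysis"
begin

text \<open>Points of Sol and tangent vectors are triples (x,y,z) of reals.
  Metric: ds^2 = e^(2z) dx^2 + e^(-2z) dy^2 + dz^2.\<close>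

type_synonym sol = "real \<times> real \<times> real"

definition sol_inner :: "sol \<Rightarrow> sol \<Rightarrow> sol \<Rightarrow> real" where
  "sol_inner p v w =
     exp (2 * snd (snd p)) * fst v * fst w
   + exp (- 2 * snd (snd p)) * fst (snd v) * fst (snd w)
   + snd (snd v) * snd (snd w)"

definition sol_norm :: "sol \<Rightarrow> sol \<Rightarrow> real" where
  "sol_norm p v = sqrt (sol_inner p v v)"

definition sol_angle :: "sol \<Rightarrow> sol \<Rightarrow> sol \<Rightarrow> real" where
  "sol_angle p v w = arccos (sol_inner p v w / (sol_norm p v * sol_norm p w))"

text \<open>Geodesic equation of the Levi-Civita connection of the Sol metric
  (Euler-Lagrange equations of the energy):
    x'' + 2 x' z' = 0,  y'' - 2 y' z' = 0,  z'' - e^(2z) x'^2 + e^(-2z) y'^2 = 0.\<close>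
definition sol_geodesic_eq :: "sol \<Rightarrow> sol \<Rightarrow> sol \<Rightarrow> bool" where
  "sol_geodesic_eq p v a \<longleftrightarrow>
     fst a + 2 * fst v * snd (snd v) = 0 \<and>
     fst (snd a) - 2 * fst (snd v) * snd (snd v) = 0 \<and>
     snd (snd a) - exp (2 * snd (snd p)) * (fst v)^2
                 + exp (- 2 * snd (snd p)) * (fst (snd v))^2 = 0"

definition sol_geodesic_on :: "real set \<Rightarrow> (real \<Rightarrow> sol) \<Rightarrow> bool" where
  "sol_geodesic_on I \<gamma> \<longleftrightarrow>
     (\<exists>\<gamma>' \<gamma>''. \<forall>t\<in>I.
        (\<gamma> has_vector_derivative \<gamma>' t) (at t within I) \<and>
        (\<gamma>' has_vector_derivative \<gamma>'' t) (at t within I) \<and>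
        sol_geodesic_eq (\<gamma> t) (\<gamma>' t) (\<gamma>'' t))"

definition sol_geodesic_segment :: "(real \<Rightarrow> sol) \<Rightarrow> sol \<Rightarrow> sol \<Rightarrow> bool" where
  "sol_geodesic_segment \<gamma> p q \<longleftrightarrow>
     sol_geodesic_on {0..1} \<gamma> \<and> \<gamma> 0 = p \<and> \<gamma> 1 = q"

definition init_tangent :: "(real \<Rightarrow> sol) \<Rightarrow> sol" where
  "init_tangent \<gamma> = vector_derivative \<gamma> (at 0 within {0..1})"

text \<open>Initial tangent at the endpoint gamma 1 of the reversed segment.\<close>
definition end_tangent :: "(real \<Rightarrow> sol) \<Rightarrow> sol" where
  "end_tangent \<gamma> = - vector_derivative \<gamma> (at 1 within {0..1})"

definition sol_on_common_geodesic :: "sol \<Rightarrow> sol \<Rightarrow> sol \<Rightarrow> bool" where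
  "sol_on_common_geodesic A B C \<longleftrightarrow>
     (\<exists>\<gamma>. sol_geodesic_on UNIV \<gamma> \<and> A \<in> range \<gamma> \<and> B \<in> range \<gamma> \<and> C \<in> range \<gamma>)"

end

theory Submission
  imports Defs
begin

lemma vd3:
  assumes "(f has_real_derivative f') (at t within S)"
      "(g has_real_derivative g') (at t within S)"
      "(h has_real_derivative h') (at t within S)"
  shows "((\<lambda>t. (f t, g t, h t)) has_vector_derivative (f', g', h')) (at t within S)"
  using assms by (auto intro!: has_vector_derivative_Pair simp: has_real_derivative_iff_has_vector_derivative)

lemma vd_fst: "(f has_vector_derivative f') F \<Longrightarrow> ((\<lambda>t. fst (f t)) has_real_derivative fst f') F"
  unfolding has_real_derivative_iff_has_vector_derivative
  by (auto simp: has_vector_derivative_def dest: has_derivative_fst)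
lemma vd_snd: "(f has_vector_derivative f') F \<Longrightarrow> ((\<lambda>t. snd (f t)) has_vector_derivative snd f') F"
  by (auto simp: has_vector_derivative_def dest: has_derivative_snd)

lemma vd_y: "(f has_vector_derivative f') F \<Longrightarrow> ((\<lambda>t. fst (snd (f t))) has_real_derivative fst (snd f')) F"
  unfolding has_real_derivative_iff_has_vector_derivative has_vector_derivative_def
  by (drule has_derivative_snd, drule has_derivative_fst) simp
lemma vd_z: "(f has_vector_derivative f') F \<Longrightarrow> ((\<lambda>t. snd (snd (f t))) has_real_derivative snd (snd f')) F"
  unfolding has_real_derivative_iff_has_vector_derivative has_vector_derivative_def
  by (drule has_derivative_snd, drule has_derivative_snd) simp

definition hy :: "real \<Rightarrow> real \<Rightarrow> real \<Rightarrow> real \<Rightarrow> real \<Rightarrow> sol" where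
  "hy m R u0 a s = (m + R * (sinh (u0 + a * s) / cosh (u0 + a * s)), 0, ln (cosh (u0 + a * s)) - ln R)"
definition hy1 :: "real \<Rightarrow> real \<Rightarrow> real \<Rightarrow> real \<Rightarrow> real \<Rightarrow> sol" where
  "hy1 m R u0 a s = (R * a / (cosh (u0 + a * s))^2, 0, a * sinh (u0 + a * s) / cosh (u0 + a * s))"
definition hy2 :: "real \<Rightarrow> real \<Rightarrow> real \<Rightarrow> real \<Rightarrow> real \<Rightarrow> sol" where
  "hy2 m R u0 a s = (- 2 * R * a^2 * sinh (u0 + a * s) / (cosh (u0 + a * s))^3, 0, a^2 / (cosh (u0 + a * s))^2)"

lemma sh2: "sinh (x::real) * sinh x = cosh x * cosh x - 1"
  using cosh_square_eq[of x] by (simp add: power2_eq_square)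

lemma cosh_ne0: "cosh (x::real) \<noteq> 0" using cosh_real_pos[of x] by linarith

lemma hy_d1: "(hy m R u0 a has_vector_derivative hy1 m R u0 a s) (at s within S)"
proof -
  have c: "cosh (u0 + a * s) \<noteq> 0" by (rule cosh_ne0)
  have e: "cosh (u0 + a * s)^2 = sinh (u0 + a * s)^2 + 1" by (rule cosh_square_eq)
  show ?thesis unfolding hy_def hy1_def
    apply (rule vd3)
      apply (rule derivative_eq_intros refl | simp add: c)+
    using c e apply (simp add: field_simps power2_eq_square)
    apply (rule derivative_eq_intros refl | simp add: c)+
    done
qed

lemma hy_d2: "(hy1 m R u0 a has_vector_derivative hy2 m R u0 a s) (at s within S)"
proof -
  have c: "cosh (u0 + a * s) \<noteq> 0" by (rule cosh_ne0)
  have e: "cosh (u0 + a * s)^2 = sinh (u0 + a * s)^2 + 1" by (rule cosh_square_eq)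
  show ?thesis unfolding hy1_def hy2_def
    apply (rule vd3)
        apply (rule derivative_eq_intros refl | simp add: c)+
    subgoal
      apply (simp add: divide_simps c)
      apply (simp add: sinh_square_eq algebra_simps eval_nat_numeral power2_eq_square sh2)
      done
    apply (rule derivative_eq_intros refl | simp add: c)+
    subgoal
      apply (simp add: divide_simps c)
      apply (simp add: sinh_square_eq algebra_simps eval_nat_numeral power2_eq_square sh2)
      done
    done
qed

lemma exp2ln: "(c::real) > 0 \<Longrightarrow> R > 0 \<Longrightarrow> exp (2 * (ln c - ln R)) = c^2 / R^2"
proof -
  assume a: "c > 0" "R > 0"
  have "exp (2 * (ln c - ln R)) = exp (ln c - ln R) * exp (ln c - ln R)"
    unfolding mult_2 by (rule exp_add)
  also have "\<dots> = c^2 / R^2" using a by (simp add: exp_diff power2_eq_square)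
  finally show ?thesis .
qed

lemma hy_geo: assumes "R > 0" shows "sol_geodesic_on I (hy m R u0 a)"
  unfolding sol_geodesic_on_def
proof (intro exI ballI conjI)
  fix s
  show "(hy m R u0 a has_vector_derivative hy1 m R u0 a s) (at s within I)" by (rule hy_d1)
  show "(hy1 m R u0 a has_vector_derivative hy2 m R u0 a s) (at s within I)" by (rule hy_d2)
  have c: "cosh (u0 + a * s) > 0" by simp
  show "sol_geodesic_eq (hy m R u0 a s) (hy1 m R u0 a s) (hy2 m R u0 a s)"
    unfolding sol_geodesic_eq_def hy_def hy1_def hy2_def
    apply (simp only: fst_conv snd_conv exp2ln[OF c assms])
    using c assms by (simp add: field_simps eval_nat_numeral)
qed

definition hx :: "real \<Rightarrow> real \<Rightarrow> real \<Rightarrow> real \<Rightarrow> real \<Rightarrow> sol" where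
  "hx n R u0 a s = (0, n + R * (sinh (u0 + a * s) / cosh (u0 + a * s)), ln R - ln (cosh (u0 + a * s)))"
definition hx1 :: "real \<Rightarrow> real \<Rightarrow> real \<Rightarrow> real \<Rightarrow> real \<Rightarrow> sol" where
  "hx1 n R u0 a s = (0, R * a / (cosh (u0 + a * s))^2, - (a * sinh (u0 + a * s) / cosh (u0 + a * s)))"
definition hx2 :: "real \<Rightarrow> real \<Rightarrow> real \<Rightarrow> real \<Rightarrow> real \<Rightarrow> sol" where
  "hx2 n R u0 a s = (0, - 2 * R * a^2 * sinh (u0 + a * s) / (cosh (u0 + a * s))^3, - (a^2 / (cosh (u0 + a * s))^2))"

lemma hx_hy: "hx n R u0 a s = (0, fst (hy n R u0 a s), - snd (snd (hy n R u0 a s)))"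
  "hx1 n R u0 a s = (0, fst (hy1 n R u0 a s), - snd (snd (hy1 n R u0 a s)))"
  "hx2 n R u0 a s = (0, fst (hy2 n R u0 a s), - snd (snd (hy2 n R u0 a s)))"
  by (simp_all add: hx_def hy_def hx1_def hy1_def hx2_def hy2_def)

lemma hx_d1: "(hx n R u0 a has_vector_derivative hx1 n R u0 a s) (at s within S)"
proof -
  have d: "(hy n R u0 a has_vector_derivative hy1 n R u0 a s) (at s within S)" by (rule hy_d1)
  have 1: "((\<lambda>t. fst (hy n R u0 a t)) has_real_derivative fst (hy1 n R u0 a s)) (at s within S)"
    by (rule vd_fst[OF d])
  have 2: "((\<lambda>t. snd (snd (hy n R u0 a t))) has_real_derivative snd (snd (hy1 n R u0 a s))) (at s within S)"
    by (rule vd_z[OF d])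
  have 3: "((\<lambda>t. - snd (snd (hy n R u0 a t))) has_real_derivative - snd (snd (hy1 n R u0 a s))) (at s within S)"
    using 2 by (rule DERIV_minus)
  have 0: "((\<lambda>t. 0::real) has_real_derivative 0) (at s within S)" by (rule DERIV_const)
  show ?thesis unfolding hx_hy[abs_def] by (rule vd3[OF 0 1 3])
qed

lemma hx_d2: "(hx1 n R u0 a has_vector_derivative hx2 n R u0 a s) (at s within S)"
proof -
  have d: "(hy1 n R u0 a has_vector_derivative hy2 n R u0 a s) (at s within S)" by (rule hy_d2)
  have 1: "((\<lambda>t. fst (hy1 n R u0 a t)) has_real_derivative fst (hy2 n R u0 a s)) (at s within S)"
    by (rule vd_fst[OF d])
  have 2: "((\<lambda>t. snd (snd (hy1 n R u0 a t))) has_real_derivative snd (snd (hy2 n R u0 a s))) (at s within S)"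
    by (rule vd_z[OF d])
  have 3: "((\<lambda>t. - snd (snd (hy1 n R u0 a t))) has_real_derivative - snd (snd (hy2 n R u0 a s))) (at s within S)"
    using 2 by (rule DERIV_minus)
  have 0: "((\<lambda>t. 0::real) has_real_derivative 0) (at s within S)" by (rule DERIV_const)
  show ?thesis unfolding hx_hy[abs_def] by (rule vd3[OF 0 1 3])
qed

lemma exp2ln': "(c::real) > 0 \<Longrightarrow> R > 0 \<Longrightarrow> exp (- 2 * (ln R - ln c)) = c^2 / R^2"
  using exp2ln[of c R] by (simp add: algebra_simps)

lemma hx_geo: assumes "R > 0" shows "sol_geodesic_on I (hx n R u0 a)"
  unfolding sol_geodesic_on_def
proof (intro exI ballI conjI)
  fix s
  show "(hx n R u0 a has_vector_derivative hx1 n R u0 a s) (at s within I)" by (rule hx_d1)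
  show "(hx1 n R u0 a has_vector_derivative hx2 n R u0 a s) (at s within I)" by (rule hx_d2)
  have c: "cosh (u0 + a * s) > 0" by simp
  show "sol_geodesic_eq (hx n R u0 a s) (hx1 n R u0 a s) (hx2 n R u0 a s)"
    unfolding sol_geodesic_eq_def hx_def hx1_def hx2_def
    apply (simp only: fst_conv snd_conv exp2ln'[OF c assms])
    using c assms by (simp add: field_simps eval_nat_numeral)
qed

definition hl :: "real \<Rightarrow> real \<Rightarrow> real \<Rightarrow> real \<Rightarrow> sol" where
  "hl p r q s = (p - p * s, r * s, q)"

lemma hl_geo: assumes "exp (2*q) * p^2 = exp (-2*q) * r^2" shows "sol_geodesic_on I (hl p r q)"
  unfolding sol_geodesic_on_def
proof (intro exI ballI conjI)
  fix s
  show "(hl p r q has_vector_derivative (-p, r, 0)) (at s within I)"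
    unfolding hl_def by (rule vd3) (rule derivative_eq_intros refl | simp)+
  show "((\<lambda>_. (-p, r, 0::real)) has_vector_derivative 0) (at s within I)"
    by (rule has_vector_derivative_const)
  show "sol_geodesic_eq (hl p r q s) (-p, r, 0) 0"
    unfolding sol_geodesic_eq_def hl_def using assms by simp
qed

lemma not_common:
  assumes A: "fst A = 0" and C: "fst C = 0" and B: "fst B \<noteq> 0" and AC: "A \<noteq> C"
  shows "\<not> sol_on_common_geodesic A B C"
proof
  assume "sol_on_common_geodesic A B C"
  then obtain \<gamma> where g: "sol_geodesic_on UNIV \<gamma>" "A \<in> range \<gamma>" "B \<in> range \<gamma>" "C \<in> range \<gamma>"
    unfolding sol_on_common_geodesic_def by blast
  from g(1) obtain \<gamma>' \<gamma>'' where g1: "\<forall>t. (\<gamma> has_vector_derivative \<gamma>' t) (at t) \<and>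
        (\<gamma>' has_vector_derivative \<gamma>'' t) (at t) \<and> sol_geodesic_eq (\<gamma> t) (\<gamma>' t) (\<gamma>'' t)"
    unfolding sol_geodesic_on_def by auto
  have d: "\<And>t. (\<gamma> has_vector_derivative \<gamma>' t) (at t)"
    and d2: "\<And>t. (\<gamma>' has_vector_derivative \<gamma>'' t) (at t)"
    and eq: "\<And>t. sol_geodesic_eq (\<gamma> t) (\<gamma>' t) (\<gamma>'' t)" using g1 by auto
  obtain tA tB tC where tA: "A = \<gamma> tA" and tB: "B = \<gamma> tB" and tC: "C = \<gamma> tC"
    using g(2,3,4) by blast
  define X where "X t = fst (\<gamma> t)" for t
  define Z where "Z t = snd (snd (\<gamma> t))" for t
  have dX: "\<And>t. (X has_real_derivative fst (\<gamma>' t)) (at t)"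
    unfolding X_def[abs_def] by (rule vd_fst[OF d])
  have dZ: "\<And>t. (Z has_real_derivative snd (snd (\<gamma>' t))) (at t)"
    unfolding Z_def[abs_def] by (rule vd_z[OF d])
  have dX1: "\<And>t. ((\<lambda>t. fst (\<gamma>' t)) has_real_derivative fst (\<gamma>'' t)) (at t)"
    by (rule vd_fst[OF d2])
  define K where "K t = exp (2 * Z t) * fst (\<gamma>' t)" for t
  have dK: "(K has_real_derivative 0) (at t)" for t
  proof -
    have "(K has_real_derivative (exp (2 * Z t) * (2 * snd (snd (\<gamma>' t)))) * fst (\<gamma>' t)
        + exp (2 * Z t) * fst (\<gamma>'' t)) (at t)"
      unfolding K_def[abs_def]
      by (rule derivative_eq_intros dZ dX1 refl | simp)+
    moreover have "fst (\<gamma>'' t) + 2 * fst (\<gamma>' t) * snd (snd (\<gamma>' t)) = 0"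
      using eq[of t] unfolding sol_geodesic_eq_def by simp
    then have "(exp (2 * Z t) * (2 * snd (snd (\<gamma>' t)))) * fst (\<gamma>' t)
        + exp (2 * Z t) * fst (\<gamma>'' t) = 0"
    proof -
      assume h: "fst (\<gamma>'' t) + 2 * fst (\<gamma>' t) * snd (snd (\<gamma>' t)) = 0"
      have "(exp (2 * Z t) * (2 * snd (snd (\<gamma>' t)))) * fst (\<gamma>' t)
        + exp (2 * Z t) * fst (\<gamma>'' t) = exp (2 * Z t) * (fst (\<gamma>'' t) + 2 * fst (\<gamma>' t) * snd (snd (\<gamma>' t)))"
        by (simp add: algebra_simps)
      also have "\<dots> = 0" using h by simp
      finally show ?thesis .
    qed
    ultimately show ?thesis by simp
  qed
  have tAC: "tA \<noteq> tC" using AC tA tC by auto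
  have XA: "X tA = 0" and XC: "X tC = 0" using A C tA tC X_def by auto
  have cX: "continuous_on S X" for S
    using dX by (meson DERIV_continuous continuous_at_imp_continuous_on)
  have diffX: "X differentiable (at x)" for x
    using dX by (meson real_differentiable_def)
  obtain z where "DERIV X z :> 0"
  proof (cases "tA < tC")
    case True
    from Rolle[OF True, of X] obtain z where "DERIV X z :> 0"
      using XA XC cX diffX by auto
    then show ?thesis using that by blast
  next
    case False
    then have "tC < tA" using tAC by auto
    from Rolle[OF this, of X] obtain z where "DERIV X z :> 0"
      using XA XC cX diffX by auto
    then show ?thesis using that by blast
  qed
  then have "fst (\<gamma>' z) = 0" using dX[of z] DERIV_unique by blast
  then have "K z = 0" unfolding K_def by simp
  moreover have "K t = K z" for t using DERIV_isconst_all[of K t z] dK by blast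
  ultimately have "K t = 0" for t by simp
  then have "fst (\<gamma>' t) = 0" for t unfolding K_def by simp
  then have "\<forall>x. DERIV X x :> 0" using dX by simp
  then have "X tB = X tA" by (rule DERIV_isconst_all)
  then show False using XA B tB X_def by simp
qed

lemma arccos_sum:
  assumes "0 \<le> b" "b \<le> 1" "0 \<le> c" "c \<le> 1" "a = sqrt (1 - b^2) * sqrt (1 - c^2) - b * c"
  shows "arccos a + arccos b + arccos c = pi"
proof -
  define B where "B = arccos b"
  define C where "C = arccos c"
  have B: "0 \<le> B" "B \<le> pi/2" unfolding B_def using assms arccos_lbound arccos_le_pi2 by auto
  have C: "0 \<le> C" "C \<le> pi/2" unfolding C_def using assms arccos_lbound arccos_le_pi2 by auto
  have cB: "cos B = b" "sin B = sqrt (1 - b^2)" unfolding B_def using assms by (auto simp: sin_arccos)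
  have cC: "cos C = c" "sin C = sqrt (1 - c^2)" unfolding C_def using assms by (auto simp: sin_arccos)
  have "cos (pi - (B + C)) = a" using cB cC assms(5) by (simp add: cos_add)
  then have "arccos a = pi - (B + C)" using B C arccos_cos[of "pi - (B + C)"] by simp
  then show ?thesis unfolding B_def C_def by simp
qed

lemma inner_scale: "sol_inner P (k *\<^sub>R v) (l *\<^sub>R w) = k * l * sol_inner P v w"
  unfolding sol_inner_def by (simp add: algebra_simps)

lemma norm_scale: "k > 0 \<Longrightarrow> sol_norm P (k *\<^sub>R v) = k * sol_norm P v"
  unfolding sol_norm_def
  by (simp add: inner_scale real_sqrt_mult power2_eq_square[symmetric])

lemma angle_scale: "k > 0 \<Longrightarrow> l > 0 \<Longrightarrow> sol_angle P (k *\<^sub>R v) (l *\<^sub>R w) = sol_angle P v w"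
  unfolding sol_angle_def by (simp add: inner_scale norm_scale)

lemma hy_at: assumes "c > 0" "R = c * sqrt (s^2 + 1)" "u0 + a * t = arsinh s"
  shows "hy m R u0 a t = (m + c * s, 0, - ln c)"
    and "hy1 m R u0 a t = (c * a / sqrt (s^2 + 1), 0, a * s / sqrt (s^2 + 1))"
proof -
  have p: "sqrt (s^2 + 1) > 0" by (simp add: add_nonneg_pos)
  show "hy m R u0 a t = (m + c * s, 0, - ln c)"
    unfolding hy_def assms(3) using assms(1) p
    by (simp add: assms(2) cosh_arsinh_real ln_mult)
  show "hy1 m R u0 a t = (c * a / sqrt (s^2 + 1), 0, a * s / sqrt (s^2 + 1))"
  proof -
    define X where "X = sqrt (s^2 + 1)"
    have X: "X > 0" using p X_def by simp
    have e: "c * X * a / X^2 = c * a / X" using X by (simp add: power2_eq_square)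
    show ?thesis
      unfolding hy1_def assms(3) cosh_arsinh_real sinh_arsinh_real assms(2)
      using e by (simp add: X_def[symmetric])
  qed
qed

lemma hx_at: assumes "c > 0" "R = c * sqrt (s^2 + 1)" "u0 + a * t = arsinh s"
  shows "hx n R u0 a t = (0, n + c * s, ln c)"
    and "hx1 n R u0 a t = (0, c * a / sqrt (s^2 + 1), - (a * s / sqrt (s^2 + 1)))"
  using hy_at[OF assms, of n] by (simp_all add: hx_hy)

definition qq :: real where "qq = - ln 4"
definition mm :: "real \<Rightarrow> real" where "mm p = (p^2 + 15) / (2 * p)"
definition nn :: "real \<Rightarrow> real" where "nn p = (p^2 - 240) / (32 * p)"
definition rr :: "real \<Rightarrow> real" where "rr p = p / 16"
definition fA :: "real \<Rightarrow> real" where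
  "fA p = - (mm p * nn p) / (sqrt (1 + (mm p)^2) * sqrt (1 + (nn p)^2))"
definition fB :: "real \<Rightarrow> real" where
  "fB p = sqrt 8 / sqrt (16 + (p - mm p)^2)"
definition fC :: "real \<Rightarrow> real" where
  "fC p = sqrt 8 / (4 * sqrt (1 + 16 * (rr p - nn p)^2))"
definition GG :: "real \<Rightarrow> real" where
  "GG p = fA p + fB p * fC p - sqrt (1 - (fB p)^2) * sqrt (1 - (fC p)^2)"

lemma e2q: "exp (2 * qq) = 1/16"
  using exp2ln[of 1 4] by (simp add: qq_def)
lemma em2q: "exp (- 2 * qq) = 16"
  using exp2ln[of 4 1] by (simp add: qq_def)
lemma em2q': "exp (- (2 * qq)) = 16"
  using em2q by simp
lemma em2q'': "exp (- (qq * 2)) = 16"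
  using em2q by (simp add: mult.commute)
lemma e2q': "exp (qq * 2) = 1/16"
  using e2q by (simp add: mult.commute)
lemma qq_ne: "qq \<noteq> 0" by (simp add: qq_def)

lemma sqp8: "p > 0 \<Longrightarrow> sqrt (p^2 / 8) = p / sqrt 8"
  by (simp add: real_sqrt_divide)

lemma angA: "sol_angle (0,0,0) (1, 0, - mm p) (0, 1, nn p) = arccos (fA p)"
  unfolding sol_angle_def sol_inner_def sol_norm_def fA_def
  by (simp add: power2_eq_square)

lemma angB: assumes "p > 0"
  shows "sol_angle (p, 0, qq) (-p, rr p, 0) (-16, 0, -(p - mm p)) = arccos (fB p)"
proof -
  have i: "sol_inner (p, 0, qq) (-p, rr p, 0) (-16, 0, -(p - mm p)) = p"
    unfolding sol_inner_def by (simp add: e2q e2q' em2q em2q' em2q'')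
  have n1: "sol_norm (p, 0, qq) (-p, rr p, 0) = p / sqrt 8"
    unfolding sol_norm_def sol_inner_def using assms
    by (simp add: e2q e2q' em2q em2q' em2q'' rr_def sqp8[symmetric] power2_eq_square)
  have n2: "sol_norm (p, 0, qq) (-16, 0, -(p - mm p)) = sqrt (16 + (p - mm p)^2)"
    unfolding sol_norm_def sol_inner_def by (simp add: e2q e2q' em2q em2q' em2q'' power2_eq_square algebra_simps)
  have pos: "sqrt 8 > (0::real)" by simp
  show ?thesis unfolding sol_angle_def i n1 n2 fB_def using assms pos
    by (simp add: field_simps)
qed

lemma angC: assumes "p > 0"
  shows "sol_angle (0, rr p, qq) (0, -1, 16 * (rr p - nn p)) (p, - rr p, 0) = arccos (fC p)"
proof -
  have i: "sol_inner (0, rr p, qq) (0, -1, 16 * (rr p - nn p)) (p, - rr p, 0) = p"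
    unfolding sol_inner_def by (simp add: e2q e2q' em2q em2q' em2q'' rr_def)
  have n2: "sol_norm (0, rr p, qq) (p, - rr p, 0) = p / sqrt 8"
    unfolding sol_norm_def sol_inner_def using assms
    by (simp add: e2q e2q' em2q em2q' em2q'' rr_def sqp8[symmetric] power2_eq_square)
  have n1: "sol_norm (0, rr p, qq) (0, -1, 16 * (rr p - nn p)) = 4 * sqrt (1 + 16 * (rr p - nn p)^2)"
  proof -
    have "sol_norm (0, rr p, qq) (0, -1, 16 * (rr p - nn p)) = sqrt (16 * (1 + 16 * (rr p - nn p)^2))"
      unfolding sol_norm_def sol_inner_def by (simp add: e2q e2q' em2q em2q' em2q'' power2_eq_square algebra_simps)
    also have "\<dots> = 4 * sqrt (1 + 16 * (rr p - nn p)^2)" by (subst real_sqrt_mult) simp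
    finally show ?thesis .
  qed
  have pos: "sqrt 8 > (0::real)" by simp
  have pos2: "sqrt (1 + 16 * (rr p - nn p)^2) > 0" by (simp add: add_pos_nonneg)
  show ?thesis unfolding sol_angle_def i n1 n2 fC_def using assms pos pos2
    by (simp add: field_simps)
qed


lemma fB2: "(fB p)^2 = 8 / (16 + (p - mm p)^2)"
proof -
  have "0 \<le> 16 + (p - mm p)^2" by (simp add: add_nonneg_nonneg)
  then show ?thesis unfolding fB_def by (simp add: power_divide)
qed

lemma fC2: "(fC p)^2 = 8 / (16 * (1 + 16 * (rr p - nn p)^2))"
proof -
  have "0 \<le> 1 + 16 * (rr p - nn p)^2" by (simp add: add_nonneg_nonneg)
  then show ?thesis unfolding fC_def by (simp add: power_divide power_mult_distrib)
qed

lemma fB_nn: "0 \<le> fB p" unfolding fB_def by simp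
lemma fC_nn: "0 \<le> fC p" unfolding fC_def by simp

lemma fB_le1: "fB p \<le> 1"
proof -
  have "(fB p)^2 \<le> 1^2" unfolding fB2 by (simp add: divide_le_eq add_nonneg_nonneg)
  then show ?thesis using fB_nn by (simp add: power_le_one_iff abs_square_le_1)
qed

lemma fC_le1: "fC p \<le> 1"
proof -
  have "(fC p)^2 \<le> 1^2" unfolding fC2 by (simp add: divide_le_eq add_nonneg_nonneg)
  then show ?thesis using fC_nn by (simp add: power_le_one_iff abs_square_le_1)
qed

lemma G5: "GG 5 \<ge> 0"
proof -
  have m: "mm 5 = 4" "nn 5 = -43/32" "rr 5 = 5/16" by (simp_all add: mm_def nn_def rr_def power2_eq_square)
  have "sqrt (1 + (mm 5)^2) * sqrt (1 + (nn 5)^2) = sqrt (48841/1024)"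
    unfolding m by (simp add: real_sqrt_mult[symmetric] power2_eq_square)
  also have "\<dots> = 221/32" by (rule real_sqrt_unique) (simp_all add: power2_eq_square)
  finally have d: "sqrt (1 + (mm 5)^2) * sqrt (1 + (nn 5)^2) = 221/32" .
  have a: "fA 5 = 172/221" unfolding fA_def d by (simp add: m)
  have b: "(fB 5)^2 = 8/17" unfolding fB2 m by (simp add: power2_eq_square)
  have s1: "sqrt (1 - (fB 5)^2) \<le> 3/4" unfolding b by (rule real_le_lsqrt) (simp_all add: power2_eq_square)
  have s2: "sqrt (1 - (fC 5)^2) \<le> 1" using fC_nn[of 5] fC_le1[of 5]
    by (simp add: power_le_one)
  have s2': "0 \<le> sqrt (1 - (fC 5)^2)" using fC_nn[of 5] fC_le1[of 5] by (simp add: power_le_one)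
  have "sqrt (1 - (fB 5)^2) * sqrt (1 - (fC 5)^2) \<le> 3/4 * 1"
    using s1 s2 s2' by (intro mult_mono) auto
  moreover have "0 \<le> fB 5 * fC 5" using fB_nn fC_nn by simp
  ultimately show ?thesis unfolding GG_def a by simp
qed


lemma G15: "GG 15 \<le> 0"
proof -
  have m: "mm 15 = 8" "nn 15 = -1/32" "rr 15 = 15/16" by (simp_all add: mm_def nn_def rr_def power2_eq_square)
  have d1: "1 \<le> sqrt (1 + (mm 15)^2)" by (rule real_sqrt_ge_one) simp
  have d2: "1 \<le> sqrt (1 + (nn 15)^2)" by (rule real_sqrt_ge_one) simp
  have d: "1 \<le> sqrt (1 + (mm 15)^2) * sqrt (1 + (nn 15)^2)"
  proof -
    have "1 * 1 \<le> sqrt (1 + (mm 15)^2) * sqrt (1 + (nn 15)^2)"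
      by (rule mult_mono[OF d1 d2]) simp_all
    then show ?thesis by simp
  qed
  have a: "fA 15 \<le> 1/4" unfolding fA_def using d by (simp add: m divide_le_eq)
  have b: "(fB 15)^2 \<le> 1/4" unfolding fB2 m by (simp add: power2_eq_square)
  have c: "(fC 15)^2 \<le> 1/4" unfolding fC2 m by (simp add: power2_eq_square)
  have b': "fB 15 \<le> 1/2"
  proof -
    have "(fB 15)^2 \<le> (1/2)^2" using b by (simp add: power2_eq_square)
    then show ?thesis by (rule power2_le_imp_le) simp
  qed
  have c': "fC 15 \<le> 1/2"
  proof -
    have "(fC 15)^2 \<le> (1/2)^2" using c by (simp add: power2_eq_square)
    then show ?thesis by (rule power2_le_imp_le) simp
  qed
  have bc: "fB 15 * fC 15 \<le> 1/2 * (1/2)" using b' c' fB_nn fC_nn by (intro mult_mono) auto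
  have "(3/4)^2 \<le> (1 - (fB 15)^2) * (1 - (fC 15)^2)"
  proof -
    have "3/4 * (3/4) \<le> (1 - (fB 15)^2) * (1 - (fC 15)^2)" using b c by (intro mult_mono) auto
    then show ?thesis by (simp add: power2_eq_square)
  qed
  then have "3/4 \<le> sqrt ((1 - (fB 15)^2) * (1 - (fC 15)^2))" by (rule real_le_rsqrt)
  then have "3/4 \<le> sqrt (1 - (fB 15)^2) * sqrt (1 - (fC 15)^2)" by (simp add: real_sqrt_mult)
  then show ?thesis unfolding GG_def using a bc by simp
qed


lemma mm_cont: "continuous_on {5..15} mm"
  unfolding mm_def by (intro continuous_intros) auto
lemma nn_cont: "continuous_on {5..15} nn"
  unfolding nn_def by (intro continuous_intros) auto
lemma rr_cont: "continuous_on {5..15} rr"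
  unfolding rr_def by (intro continuous_intros) auto

lemma ne1: "1 + x^2 \<noteq> (0::real)" by (smt (verit) zero_le_power2)

lemma ne16: "16 + x^2 \<noteq> (0::real)" by (smt (verit) zero_le_power2)
lemma ne16b: "1 + 16 * x^2 \<noteq> (0::real)" by (smt (verit) zero_le_power2)

lemma pos1: "sqrt (1 + x^2) > (0::real)" by (simp add: add_pos_nonneg)

lemma fA_cont: "continuous_on {5..15} fA"
proof -
  have "continuous_on {5..15} (\<lambda>p. - (mm p * nn p) / (sqrt (1 + (mm p)^2) * sqrt (1 + (nn p)^2)))"
    apply (intro continuous_intros mm_cont nn_cont)
    by (simp add: ne1)
  then show ?thesis unfolding fA_def[abs_def] .
qed

lemma fB_cont: "continuous_on {5..15} fB"
proof -
  have "continuous_on {5..15} (\<lambda>p. sqrt 8 / sqrt (16 + (p - mm p)^2))"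
    apply (intro continuous_intros mm_cont)
    by (simp add: ne16)
  then show ?thesis unfolding fB_def[abs_def] .
qed

lemma fC_cont: "continuous_on {5..15} fC"
proof -
  have "continuous_on {5..15} (\<lambda>p. sqrt 8 / (4 * sqrt (1 + 16 * (rr p - nn p)^2)))"
    apply (intro continuous_intros rr_cont nn_cont)
    by (simp add: ne16b)
  then show ?thesis unfolding fC_def[abs_def] .
qed

lemma GG_cont: "continuous_on {5..15} GG"
proof -
  have "continuous_on {5..15} (\<lambda>p. fA p + fB p * fC p - sqrt (1 - (fB p)^2) * sqrt (1 - (fC p)^2))"
    by (intro continuous_intros) (simp_all add: fA_cont fB_cont fC_cont)
  then show ?thesis unfolding GG_def[abs_def] .
qed

lemma hl_d: "(hl p r q has_vector_derivative (-p, r, 0)) (at s within S)"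
  unfolding hl_def by (rule vd3) (rule derivative_eq_intros refl | simp)+

lemma angle_scale2: "l > 0 \<Longrightarrow> sol_angle P v (l *\<^sub>R w) = sol_angle P v w"
  using angle_scale[of 1 l P v w] by simp
lemma angle_scale1: "k > 0 \<Longrightarrow> sol_angle P (k *\<^sub>R v) w = sol_angle P v w"
  using angle_scale[of k 1 P v w] by simp

lemma vd01: "((g::real \<Rightarrow> sol) has_vector_derivative v) (at t within {0..1}) \<Longrightarrow> t \<in> {0..1} \<Longrightarrow>
  vector_derivative g (at t within {0..1}) = v"
  using vector_derivative_within_closed_interval[of 0 1 t g v] by simp

theorem lemma3p4:
  shows "\<exists>A B C \<gamma>AB \<gamma>BC \<gamma>CA.
     A \<noteq> B \<and> B \<noteq> C \<and> A \<noteq> C \<and>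
     \<not> sol_on_common_geodesic A B C \<and>
     sol_geodesic_segment \<gamma>AB A B \<and>
     sol_geodesic_segment \<gamma>BC B C \<and>
     sol_geodesic_segment \<gamma>CA C A \<and>
     sol_angle A (init_tangent \<gamma>AB) (end_tangent \<gamma>CA)
   + sol_angle B (init_tangent \<gamma>BC) (end_tangent \<gamma>AB)
   + sol_angle C (init_tangent \<gamma>CA) (end_tangent \<gamma>BC) = pi"
proof -
  obtain p where p5: "5 \<le> p" "p \<le> 15" and G0: "GG p = 0"
    using IVT2'[of GG 15 0 5] G5 G15 GG_cont by auto
  have hp: "p > 0" using p5 by simp
  define m where "m = mm p"
  define n where "n = nn p"
  define r where "r = rr p"
  have m2: "2 * p * m = p * p + 15" unfolding m_def mm_def using hp by (simp add: power2_eq_square)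
  have n2: "32 * p * n = p * p - 240" unfolding n_def nn_def using hp by (simp add: power2_eq_square)
  have r2: "16 * r = p" unfolding r_def rr_def by simp
  have mpos: "m > 0" unfolding m_def mm_def using hp by (simp add: add_pos_nonneg)
  have pm: "p - m > 0"
  proof -
    have "2 * p * (p - m) = p * p - 15" using m2 by (simp add: algebra_simps)
    moreover have "p * p - 15 > 0" using p5 mult_mono[of 5 p 5 p] by simp
    ultimately show ?thesis using hp by (smt (verit) mult_pos_pos zero_less_mult_pos)
  qed
  have nneg: "n \<le> 0"
  proof -
    have "p * p \<le> 225" using p5 hp mult_mono[of p 15 p 15] by simp
    then have "32 * p * n \<le> 0" using n2 by simp
    then show ?thesis using hp by (smt (verit) mult_pos_pos)
  qed
  have rpos: "r > 0" using r2 hp by simp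
  have I1: "sqrt (m^2 + 1) = 4 * sqrt (((p - m)/4)^2 + 1)"
  proof -
    have "16 * (((p - m)/4)^2 + 1) = p * p - 2 * p * m + m * m + 16"
      by (simp add: power2_eq_square field_simps)
    also have "\<dots> = (-m)^2 + 1" using m2 by (simp add: power2_eq_square)
    finally have e: "(-m)^2 + 1 = 16 * (((p - m)/4)^2 + 1)" by simp
    have e': "m^2 + 1 = 16 * (((p - m)/4)^2 + 1)" using e by simp
    show ?thesis unfolding e' by (subst real_sqrt_mult) simp
  qed
  have I2: "sqrt (n^2 + 1) = 1/4 * sqrt ((4 * (r - n))^2 + 1)"
  proof -
    have "(4 * (r - n))^2 + 1 = 16 * r * r - 2 * (16 * r) * n + 16 * n * n + 1"
      by (simp add: power2_eq_square field_simps)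
    also have "\<dots> = p * p / 16 - 2 * p * n + 16 * n * n + 1" using r2 by (simp add: field_simps)
    also have "\<dots> = 16 * ((-n)^2 + 1)" using n2 by (simp add: power2_eq_square field_simps)
    finally have "16 * ((-n)^2 + 1) = (4 * (r - n))^2 + 1" by simp
    then have e: "(4 * (r - n))^2 + 1 = 16 * (n^2 + 1)" by simp
    show ?thesis unfolding e by (subst real_sqrt_mult) simp
  qed
  define a where "a = arsinh ((p - m)/4) - arsinh (-m)"
  define b where "b = arsinh (-n) - arsinh (4 * (r - n))"
  define R1 where "R1 = sqrt ((-m)^2 + 1)"
  define R2 where "R2 = sqrt ((-n)^2 + 1)"
  define gAB where "gAB = hy m R1 (arsinh (-m)) a"
  define gBC where "gBC = hl p r qq"
  define gCA where "gCA = hx n R2 (arsinh (4 * (r - n))) b"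
  have "arsinh (-m) < arsinh ((p - m)/4)"
    by (rule arsinh_real_strict_mono) (use mpos pm in \<open>simp add: field_simps\<close>)
  then have apos: "a > 0" unfolding a_def by linarith
  have "arsinh (-n) < arsinh (4 * (r - n))"
    by (rule arsinh_real_strict_mono) (use nneg rpos in \<open>simp add: algebra_simps\<close>)
  then have bneg: "b < 0" unfolding b_def by linarith
  have R1pos: "R1 > 0" unfolding R1_def by (simp add: add_nonneg_pos)
  have R2pos: "R2 > 0" unfolding R2_def by (simp add: add_nonneg_pos)
  have AB0_1: "hy m R1 (arsinh (-m)) a 0 = (m + 1 * (-m), 0, - ln 1)"
    by (rule hy_at(1); simp add: R1_def)
  have AB0_2: "hy1 m R1 (arsinh (-m)) a 0 = (1 * a / sqrt ((-m)^2 + 1), 0, a * (-m) / sqrt ((-m)^2 + 1))"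
    by (rule hy_at(2); simp add: R1_def)
  note AB0 = AB0_1 AB0_2
  have AB1_1: "hy m R1 (arsinh (-m)) a 1 = (m + 4 * ((p - m)/4), 0, - ln 4)"
    by (rule hy_at(1); simp add: R1_def I1 a_def)
  have AB1_2: "hy1 m R1 (arsinh (-m)) a 1 = (4 * a / sqrt (((p - m)/4)^2 + 1), 0, a * ((p - m)/4) / sqrt (((p - m)/4)^2 + 1))"
    by (rule hy_at(2); simp add: R1_def I1 a_def)
  note AB1 = AB1_1 AB1_2
  have CA0_1: "hx n R2 (arsinh (4 * (r - n))) b 0 = (0, n + 1/4 * (4 * (r - n)), ln (1/4))"
    by (rule hx_at(1); simp add: R2_def I2)
  have CA0_2: "hx1 n R2 (arsinh (4 * (r - n))) b 0 = (0, 1/4 * b / sqrt ((4 * (r - n))^2 + 1), - (b * (4 * (r - n)) / sqrt ((4 * (r - n))^2 + 1)))"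
    by (rule hx_at(2); simp add: R2_def I2)
  note CA0 = CA0_1 CA0_2
  have CA1_1: "hx n R2 (arsinh (4 * (r - n))) b 1 = (0, n + 1 * (-n), ln 1)"
    by (rule hx_at(1); simp add: R2_def b_def)
  have CA1_2: "hx1 n R2 (arsinh (4 * (r - n))) b 1 = (0, 1 * b / sqrt ((-n)^2 + 1), - (b * (-n) / sqrt ((-n)^2 + 1)))"
    by (rule hx_at(2); simp add: R2_def b_def)
  note CA1 = CA1_1 CA1_2
  define A :: sol where "A = (0, 0, 0)"
  define B :: sol where "B = (p, 0, qq)"
  define C :: sol where "C = (0, r, qq)"
  have segAB: "sol_geodesic_segment gAB A B"
    unfolding sol_geodesic_segment_def gAB_def A_def B_def
    using hy_geo[OF R1pos] AB0(1) AB1(1) by (simp add: qq_def field_simps)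
  have segBC: "sol_geodesic_segment gBC B C"
  proof -
    have "exp (2 * qq) * p^2 = exp (- 2 * qq) * r^2" by (simp only: e2q em2q) (simp add: r_def rr_def power2_eq_square)
    then show ?thesis unfolding sol_geodesic_segment_def gBC_def B_def C_def
      using hl_geo by (simp add: hl_def)
  qed
  have segCA: "sol_geodesic_segment gCA C A"
    unfolding sol_geodesic_segment_def gCA_def A_def C_def
    using hx_geo[OF R2pos] CA0(1) CA1(1) by (simp add: qq_def ln_div field_simps)
  have iAB: "init_tangent gAB = (a / sqrt (m^2 + 1)) *\<^sub>R (1, 0, -m)"
    unfolding init_tangent_def gAB_def
    by (subst vd01[OF hy_d1]) (auto simp: AB0 simp del: arsinh_minus_real)
  have eAB: "end_tangent gAB = (a / (4 * sqrt (((p - m)/4)^2 + 1))) *\<^sub>R (-16, 0, -(p - m))"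
    unfolding end_tangent_def gAB_def
  proof -
    have K: "sqrt (((p - m)/4)^2 + 1) > 0" by (simp add: add_nonneg_pos)
    show "- vector_derivative (hy m R1 (arsinh (- m)) a) (at 1 within {0..1}) =
      (a / (4 * sqrt (((p - m)/4)^2 + 1))) *\<^sub>R (-16, 0, -(p - m))"
      apply (subst vd01[OF hy_d1])
       apply simp
      unfolding AB1_2 using K by (simp add: field_simps)
  qed
  have iBC: "init_tangent gBC = (-p, r, 0)"
    unfolding init_tangent_def gBC_def by (subst vd01[OF hl_d]) auto
  have eBC: "end_tangent gBC = (p, -r, 0)"
    unfolding end_tangent_def gBC_def by (subst vd01[OF hl_d]) auto
  have iCA: "init_tangent gCA = (- b / (4 * sqrt ((4 * (r - n))^2 + 1))) *\<^sub>R (0, -1, 16 * (r - n))"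
    unfolding init_tangent_def gCA_def
  proof -
    have K: "sqrt ((4 * (r - n))^2 + 1) > 0" by (simp add: add_nonneg_pos)
    show "vector_derivative (hx n R2 (arsinh (4 * (r - n))) b) (at 0 within {0..1}) =
      (- b / (4 * sqrt ((4 * (r - n))^2 + 1))) *\<^sub>R (0, -1, 16 * (r - n))"
      apply (subst vd01[OF hx_d1])
       apply simp
      unfolding CA0_2 using K by (simp add: field_simps)
  qed
  have eCA: "end_tangent gCA = (- b / sqrt (n^2 + 1)) *\<^sub>R (0, 1, n)"
    unfolding end_tangent_def gCA_def
  proof -
    have K: "sqrt (n^2 + 1) > 0" by (simp add: add_nonneg_pos)
    show "- vector_derivative (hx n R2 (arsinh (4 * (r - n))) b) (at 1 within {0..1}) =
      (- b / sqrt (n^2 + 1)) *\<^sub>R (0, 1, n)"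
      apply (subst vd01[OF hx_d1])
       apply simp
      unfolding CA1_2 using K by (simp add: field_simps)
  qed
  have k1: "a / sqrt (m^2 + 1) > 0" using apos by (simp add: add_nonneg_pos)
  have k2: "a / (4 * sqrt (((p - m)/4)^2 + 1)) > 0" using apos by (simp add: add_nonneg_pos)
  have k3: "- b / (4 * sqrt ((4 * (r - n))^2 + 1)) > 0"
    by (rule divide_pos_pos) (use bneg in \<open>simp_all add: add_nonneg_pos\<close>)
  have k4: "- b / sqrt (n^2 + 1) > 0"
    by (rule divide_pos_pos) (use bneg in \<open>simp_all add: add_nonneg_pos\<close>)
  have angA': "sol_angle A (init_tangent gAB) (end_tangent gCA) = arccos (fA p)"
    unfolding iAB eCA A_def angle_scale[OF k1 k4] unfolding m_def n_def by (rule angA)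
  have angB': "sol_angle B (init_tangent gBC) (end_tangent gAB) = arccos (fB p)"
    unfolding iBC eAB B_def angle_scale2[OF k2] unfolding m_def r_def by (rule angB[OF hp])
  have angC': "sol_angle C (init_tangent gCA) (end_tangent gBC) = arccos (fC p)"
    unfolding iCA eBC C_def angle_scale1[OF k3] unfolding n_def r_def by (rule angC[OF hp])
  have sum: "arccos (fA p) + arccos (fB p) + arccos (fC p) = pi"
    by (rule arccos_sum) (use fB_nn fB_le1 fC_nn fC_le1 G0 in \<open>auto simp: GG_def\<close>)
  have dist: "A \<noteq> B" "B \<noteq> C" "A \<noteq> C"
    unfolding A_def B_def C_def using hp qq_ne by auto
  have nc: "\<not> sol_on_common_geodesic A B C"
    by (rule not_common) (use hp qq_ne in \<open>auto simp: A_def B_def C_def\<close>)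
  show ?thesis
    using dist nc segAB segBC segCA angA' angB' angC' sum by metis
qed

end
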